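(* There exists a constant $c_1>0$ such that for all sufficiently large $n$ with $t\le c_1 n$, for all $k$ with $30\, x\log n\le k\le c_1 n$ and every tuple $(k_1,\dots,k_x)$ of integers with $t_i\le k_i\le a_i$ and $\sum_i k_i=k$, we have $a_{k_1,\dots,k_x}<\frac{1}{n^{3x}}$.
   Context: Random graph model: $V$ is a set of $n$ vertices, $B\subseteq V$ a target set with $|B|=t$, each $v\in V$ has a prescribed out-degree $d_v$ with $2\le d_{\min}\le d_v\le d_{\max}$ (constants), and for each $v$ independently its out-neighbour set is chosen uniformly among all $d_v$-element subsets of $V$. Let $d_1,\dots,d_x$ be the distinct out-degrees, $a_i$ the number of vertices of out-degree $d_i$, $t_i$ the number of vertices of $B$ of out-degree $d_i$; $\log$ is the natural logarithm. For $S\supseteq B$ containing $k_i$ vertices of out-degree $d_i$, $R(k_1,\dots,k_x)$ is the probability that every vertex of $S$ has a directed path to $B$ lying inside $S$. For $k=\sum_i k_i$ with $t_i\le k_i\le a_i$, $a_{k_1,\dots,k_x}=\left(\prod_{i=1}^x\binom{a_i-t_i}{k_i-t_i}\left(\binom{n-k}{d_i}/\binom{n}{d_i}\right)^{a_i-k_i}\right)R(k_1,\dots,k_x)$, with the factor $(\binom{n-k}{d_i}/\binom{n}{d_i})^{a_i-k_i}$ equal to $1$ when $a_i=k_i$. *)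

theory Defs
  imports "HOL-Probability.Probability"
begin

definition nbr_pmf :: "nat set \<Rightarrow> (nat \<Rightarrow> nat) \<Rightarrow> (nat \<Rightarrow> nat set) pmf" where
  "nbr_pmf V d = Pi_pmf V {} (\<lambda>v. pmf_of_set {A. A \<subseteq> V \<and> card A = d v})"

definition all_reach_within :: "(nat \<Rightarrow> nat set) \<Rightarrow> nat set \<Rightarrow> nat set \<Rightarrow> bool" where
  "all_reach_within N S B \<longleftrightarrow>
     (\<forall>v\<in>S. \<exists>b\<in>B. (v, b) \<in> {(u, w). u \<in> S \<and> w \<in> S \<and> w \<in> N u}\<^sup>*)"

definition R_prob :: "nat set \<Rightarrow> (nat \<Rightarrow> nat) \<Rightarrow> nat set \<Rightarrow> nat set \<Rightarrow> real" where
  "R_prob V d B S = measure_pmf.prob (nbr_pmf V d) {N. all_reach_within N S B}"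

definition cnt :: "(nat \<Rightarrow> nat) \<Rightarrow> nat set \<Rightarrow> nat \<Rightarrow> nat" where
  "cnt d X \<delta> = card {v \<in> X. d v = \<delta>}"

text \<open>The quantity a_{k_1,...,k_x} for the degree profile (k_i) of S; the product
  ranges over the distinct out-degrees d_1,...,d_x, i.e. over d ` V.\<close>
definition a_coef :: "nat set \<Rightarrow> (nat \<Rightarrow> nat) \<Rightarrow> nat set \<Rightarrow> nat set \<Rightarrow> real" where
  "a_coef V d B S =
     (\<Prod>\<delta>\<in>d ` V.
        real ((cnt d V \<delta> - cnt d B \<delta>) choose (cnt d S \<delta> - cnt d B \<delta>)) *
        (real ((card V - card S) choose \<delta>) / real (card V choose \<delta>))
          ^ (cnt d V \<delta> - cnt d S \<delta>))
     * R_prob V d B S"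

end

theory Submission
  imports Defs
begin



lemma reach_nbr:
  assumes "all_reach_within N S B" "v \<in> S" "v \<notin> B"
  shows "N v \<inter> S \<noteq> {}"
proof -
  obtain b where b: "b \<in> B" "(v, b) \<in> {(u, w). u \<in> S \<and> w \<in> S \<and> w \<in> N u}\<^sup>*"
    using assms unfolding all_reach_within_def by blast
  have "v \<noteq> b" using b assms by auto
  from b(2) show ?thesis
  proof (cases rule: converse_rtranclE)
    case base then show ?thesis using \<open>v \<noteq> b\<close> by simp
  next
    case (step w) then show ?thesis by auto
  qed
qed

lemma prob_hit:
  assumes "finite V" "S \<subseteq> V" "\<delta> \<le> card V"
  shows "measure_pmf.prob (pmf_of_set {A. A \<subseteq> V \<and> card A = \<delta>}) {A. A \<inter> S \<noteq> {}}
         = 1 - real ((card V - card S) choose \<delta>) / real (card V choose \<delta>)"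
proof -
  define U where "U = {A. A \<subseteq> V \<and> card A = \<delta>}"
  define Z where "Z = {A. A \<inter> S \<noteq> {}}"
  have fin: "finite U" unfolding U_def using assms(1) by simp
  have cU: "card U = card V choose \<delta>" unfolding U_def using n_subsets[OF assms(1)] by simp
  have pos: "card V choose \<delta> > 0" using assms(3) by simp
  have ne: "U \<noteq> {}" using cU pos by fastforce
  have eq: "U - Z = {A. A \<subseteq> V - S \<and> card A = \<delta>}" unfolding U_def Z_def by blast
  have c2: "card (U - Z) = (card V - card S) choose \<delta>"
    unfolding eq using n_subsets[of "V - S" \<delta>] assms(1,2)
    by (simp add: card_Diff_subset finite_subset)
  have s: "U \<inter> Z = U - (U - Z)" by blast
  have "card (U \<inter> Z) = card U - card (U - Z)"
    unfolding s using fin by (simp add: card_Diff_subset)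
  moreover have "card (U - Z) \<le> card U" using fin by (simp add: card_mono)
  ultimately have r: "real (card (U \<inter> Z)) = real (card U) - real (card (U - Z))"
    by simp
  have "measure_pmf.prob (pmf_of_set U) Z = real (card (U \<inter> Z)) / real (card U)"
    by (rule measure_pmf_of_set[OF ne fin])
  also have "\<dots> = 1 - real ((card V - card S) choose \<delta>) / real (card V choose \<delta>)"
    unfolding r c2 cU using pos by (simp add: diff_divide_distrib)
  finally show ?thesis unfolding U_def Z_def .
qed

lemma R_bound:
  assumes "finite V" "S \<subseteq> V" "\<forall>v\<in>V. d v \<le> card V"
  shows "R_prob V d B S \<le> (\<Prod>v\<in>S - B. 1 - real ((card V - card S) choose d v) / real (card V choose d v))"
proof -
  define Y where "Y = (\<lambda>v. if v \<in> S - B then {A. A \<inter> S \<noteq> {}} else (UNIV :: nat set set))"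
  have sub: "{N. all_reach_within N S B} \<subseteq> Pi V Y"
  proof
    fix N assume "N \<in> {N. all_reach_within N S B}"
    then have "all_reach_within N S B" by simp
    then show "N \<in> Pi V Y" unfolding Y_def Pi_def using reach_nbr by fastforce
  qed
  have "R_prob V d B S \<le> measure_pmf.prob (nbr_pmf V d) (Pi V Y)"
    unfolding R_prob_def by (rule measure_pmf.finite_measure_mono[OF sub]) simp
  also have "\<dots> = (\<Prod>v\<in>V. measure_pmf.prob (pmf_of_set {A. A \<subseteq> V \<and> card A = d v}) (Y v))"
    unfolding nbr_pmf_def by (rule measure_Pi_pmf_Pi[OF assms(1)])
  also have "\<dots> = (\<Prod>v\<in>V. if v \<in> S - B then 1 - real ((card V - card S) choose d v) / real (card V choose d v) else 1)"
  proof (rule prod.cong[OF refl])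
    fix v assume v: "v \<in> V"
    show "measure_pmf.prob (pmf_of_set {A. A \<subseteq> V \<and> card A = d v}) (Y v) = (if v \<in> S - B then 1 - real ((card V - card S) choose d v) / real (card V choose d v) else 1)"
    proof (cases "v \<in> S - B")
      case True
      then show ?thesis unfolding Y_def using prob_hit[OF assms(1,2), of "d v"] assms(3) v by simp
    next
      case False
      then have "Y v = UNIV" unfolding Y_def by auto
      then show ?thesis using False by (simp only: if_not_P[OF False]) simp
    qed
  qed
  also have "\<dots> = (\<Prod>v\<in>S - B. 1 - real ((card V - card S) choose d v) / real (card V choose d v))"
  proof -
    have "(\<Prod>v\<in>V. if v \<in> S - B then 1 - real ((card V - card S) choose d v) / real (card V choose d v) else 1)
       = (\<Prod>v\<in>V \<inter> (S - B). 1 - real ((card V - card S) choose d v) / real (card V choose d v))"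
      by (rule prod.inter_restrict[symmetric, OF assms(1)])
    moreover have "V \<inter> (S - B) = S - B" using assms(2) by blast
    ultimately show ?thesis by simp
  qed
  finally show ?thesis .
qed


lemma prod_group_deg:
  assumes "finite V" "X \<subseteq> V"
  shows "(\<Prod>v\<in>X. (f (d v)::real)) = (\<Prod>\<delta>\<in>d ` V. f \<delta> ^ cnt d X \<delta>)"
proof -
  have fX: "finite X" using assms finite_subset by blast
  have "(\<Prod>v\<in>X. f (d v)) = (\<Prod>\<delta>\<in>d ` V. \<Prod>v\<in>{x. x \<in> X \<and> d x = \<delta>}. f (d v))"
    by (rule prod.group[symmetric]) (use assms fX in auto)
  also have "\<dots> = (\<Prod>\<delta>\<in>d ` V. f \<delta> ^ cnt d X \<delta>)"
  proof (rule prod.cong[OF refl])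
    fix \<delta> assume "\<delta> \<in> d ` V"
    have "(\<Prod>v\<in>{x. x \<in> X \<and> d x = \<delta>}. f (d v)) = (\<Prod>v\<in>{x. x \<in> X \<and> d x = \<delta>}. f \<delta>)"
      by (rule prod.cong) auto
    also have "\<dots> = f \<delta> ^ cnt d X \<delta>" unfolding cnt_def by simp
    finally show "(\<Prod>v\<in>{x. x \<in> X \<and> d x = \<delta>}. f (d v)) = f \<delta> ^ cnt d X \<delta>" .
  qed
  finally show ?thesis .
qed

lemma sum_group_deg:
  assumes "finite V" "X \<subseteq> V"
  shows "(\<Sum>v\<in>X. (f (d v)::real)) = (\<Sum>\<delta>\<in>d ` V. f \<delta> * real (cnt d X \<delta>))"
proof -
  have fX: "finite X" using assms finite_subset by blast
  have "(\<Sum>v\<in>X. f (d v)) = (\<Sum>\<delta>\<in>d ` V. \<Sum>v\<in>{x. x \<in> X \<and> d x = \<delta>}. f (d v))"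
    by (rule sum.group[symmetric]) (use assms fX in auto)
  also have "\<dots> = (\<Sum>\<delta>\<in>d ` V. f \<delta> * real (cnt d X \<delta>))"
  proof (rule sum.cong[OF refl])
    fix \<delta> assume "\<delta> \<in> d ` V"
    have "(\<Sum>v\<in>{x. x \<in> X \<and> d x = \<delta>}. f (d v)) = (\<Sum>v\<in>{x. x \<in> X \<and> d x = \<delta>}. f \<delta>)"
      by (rule sum.cong) auto
    also have "\<dots> = f \<delta> * real (cnt d X \<delta>)" unfolding cnt_def by simp
    finally show "(\<Sum>v\<in>{x. x \<in> X \<and> d x = \<delta>}. f (d v)) = f \<delta> * real (cnt d X \<delta>)" .
  qed
  finally show ?thesis .
qed

lemma cnt_diff:
  assumes "finite X" "B \<subseteq> X"
  shows "cnt d X \<delta> - cnt d B \<delta> = cnt d (X - B) \<delta>"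
proof -
  have e: "{v \<in> X - B. d v = \<delta>} = {v \<in> X. d v = \<delta>} - {v \<in> B. d v = \<delta>}" by blast
  have "card ({v \<in> X. d v = \<delta>} - {v \<in> B. d v = \<delta>}) = card {v \<in> X. d v = \<delta>} - card {v \<in> B. d v = \<delta>}"
  proof (rule card_Diff_subset)
    have "finite B" using assms finite_subset by blast
    then show "finite {v \<in> B. d v = \<delta>}" by simp
    show "{v \<in> B. d v = \<delta>} \<subseteq> {v \<in> X. d v = \<delta>}" using assms by blast
  qed
  then show ?thesis unfolding cnt_def e by simp
qed

lemma binom_pow_le:
  fixes y :: real
  assumes "y \<ge> 0"
  shows "real (A choose m) * y ^ m \<le> (1 + y) ^ A"
proof (cases "m \<le> A")
  case True
  have "(1 + y) ^ A = (\<Sum>j\<le>A. real (A choose j) * y ^ j * 1 ^ (A - j))"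
    using binomial_ring[of y 1 A] by (simp add: add.commute)
  also have "\<dots> \<ge> real (A choose m) * y ^ m * 1 ^ (A - m)"
    by (rule member_le_sum) (use True assms in auto)
  finally show ?thesis by simp
next
  case False
  then show ?thesis using assms by (simp add: binomial_eq_0)
qed

lemma q_bounds:
  assumes "k + \<delta> \<le> n" "\<delta> < n"
  shows "real ((n - k) choose \<delta>) / real (n choose \<delta>) \<le> (1 - real k / real n) ^ \<delta>"
    and "(1 - real k / real (n - \<delta>)) ^ \<delta> \<le> real ((n - k) choose \<delta>) / real (n choose \<delta>)"
proof -
  have n0: "real n > 0" using assms by simp
  have "real ((n - k) choose \<delta>) / real (n choose \<delta>)
      = (\<Prod>i = 0..<\<delta>. real (n - k - i) / real (\<delta> - i)) / (\<Prod>i = 0..<\<delta>. real (n - i) / real (\<delta> - i))"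
    using assms by (simp add: binomial_altdef_of_nat)
  also have "\<dots> = (\<Prod>i = 0..<\<delta>. (real (n - k - i) / real (\<delta> - i)) / (real (n - i) / real (\<delta> - i)))"
    by (rule prod_dividef[symmetric])
  also have "\<dots> = (\<Prod>i = 0..<\<delta>. (real n - real k - real i) / (real n - real i))"
  proof (rule prod.cong[OF refl])
    fix i assume i: "i \<in> {0..<\<delta>}"
    then have "real (\<delta> - i) > 0" by simp
    moreover have "real (n - k - i) = real n - real k - real i" using i assms by simp
    moreover have "real (n - i) = real n - real i" using i assms by simp
    ultimately show "(real (n - k - i) / real (\<delta> - i)) / (real (n - i) / real (\<delta> - i)) = (real n - real k - real i) / (real n - real i)"
      by simp
  qed
  finally have eq: "real ((n - k) choose \<delta>) / real (n choose \<delta>) = (\<Prod>i = 0..<\<delta>. (real n - real k - real i) / (real n - real i))" .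
  have "(\<Prod>i = 0..<\<delta>. (real n - real k - real i) / (real n - real i)) \<le> (\<Prod>i = 0..<\<delta>. 1 - real k / real n)"
  proof (rule prod_mono)
    fix i assume i: "i \<in> {0..<\<delta>}"
    have p: "real n - real i > 0" using i assms by simp
    have a: "real n - real k - real i \<ge> 0" using i assms by simp
    have "(real n - real k - real i) * real n \<le> (real n - real k) * (real n - real i)"
    proof -
      have "real i * real k \<le> real i * real n" using assms by (simp add: mult_left_mono)
      then show ?thesis by (simp add: algebra_simps)
    qed
    then have "(real n - real k - real i) / (real n - real i) \<le> (real n - real k) / real n"
      using p n0 by (simp add: divide_simps)
    moreover have "(real n - real k) / real n = 1 - real k / real n" using n0 by (simp add: divide_simps)
    moreover have "0 \<le> (real n - real k - real i) / (real n - real i)" using a p by simp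
    ultimately show "0 \<le> (real n - real k - real i) / (real n - real i) \<and> (real n - real k - real i) / (real n - real i) \<le> 1 - real k / real n"
      by simp
  qed
  then show "real ((n - k) choose \<delta>) / real (n choose \<delta>) \<le> (1 - real k / real n) ^ \<delta>"
    using eq by simp
  have "(\<Prod>i = 0..<\<delta>. 1 - real k / real (n - \<delta>)) \<le> (\<Prod>i = 0..<\<delta>. (real n - real k - real i) / (real n - real i))"
  proof (rule prod_mono)
    fix i assume i: "i \<in> {0..<\<delta>}"
    have p: "real n - real i > 0" using i assms by simp
    have p2: "real n - real \<delta> > 0" using assms by simp
    have nd: "real (n - \<delta>) = real n - real \<delta>" using assms by simp
    have a: "real n - real \<delta> - real k \<ge> 0" using assms by simp
    have "(real n - real \<delta> - real k) * (real n - real i) \<le> (real n - real k - real i) * (real n - real \<delta>)"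
    proof -
      have "real k * real i \<le> real k * real \<delta>" using i by (simp add: mult_left_mono)
      then show ?thesis by (simp add: algebra_simps)
    qed
    then have "(real n - real \<delta> - real k) / (real n - real \<delta>) \<le> (real n - real k - real i) / (real n - real i)"
      using p p2 by (simp add: divide_simps)
    moreover have "1 - real k / real (n - \<delta>) = (real n - real \<delta> - real k) / (real n - real \<delta>)"
      using p2 nd by (simp add: divide_simps)
    moreover have "(real n - real \<delta> - real k) / (real n - real \<delta>) \<ge> 0" using a p2 by simp
    ultimately show "0 \<le> 1 - real k / real (n - \<delta>) \<and> 1 - real k / real (n - \<delta>) \<le> (real n - real k - real i) / (real n - real i)"
      by simp
  qed
  then show "(1 - real k / real (n - \<delta>)) ^ \<delta> \<le> real ((n - k) choose \<delta>) / real (n choose \<delta>)"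
    using eq by simp
qed


lemma arith_final:
  fixes K n u w D M SVB dm :: real
  assumes K: "K > 0" and n: "n > 0" and w: "w = K / n" and u0: "0 \<le> u" and uw: "u \<le> (41/100) * w"
    and M: "M \<le> K" and SVB: "SVB \<le> D + dm * K" and D: "D \<ge> 2 * (n - K)"
    and Kn: "1000 * dm * K \<le> n" and dm: "dm \<ge> 1"
  shows "M + u * SVB - w * D \<le> - K / 6"
proof -
  have wn: "w * n = K" using w n by simp
  have w0: "w \<ge> 0" using w K n by simp
  have "(1000 * K) * 1 \<le> (1000 * K) * dm" using dm K by (intro mult_left_mono) auto
  then have KnK: "1000 * K \<le> n" using Kn by (simp add: algebra_simps)
  have "u * SVB \<le> u * (D + dm * K)" using SVB u0 by (simp add: mult_left_mono)
  moreover have "(u - w) * D \<le> (u - w) * (2 * (n - K))"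
    using D uw w0 by (intro mult_left_mono_neg) auto
  moreover have "(u - w) * (2 * (n - K)) \<le> (-(59/100) * w) * (2 * (n - K))"
    using uw KnK K by (intro mult_right_mono) auto
  moreover have "u * (dm * K) \<le> ((41/100) * w) * (dm * K)"
    using uw dm K by (intro mult_right_mono) auto
  moreover have "w * K \<le> K / 1000"
  proof -
    have "w * K * 1000 = K * (1000 * K) / n" using w by simp
    also have "\<dots> \<le> K * n / n" using KnK K n by (intro divide_right_mono mult_left_mono) auto
    finally show ?thesis using n by simp
  qed
  moreover have "w * (dm * K) \<le> K / 1000"
  proof -
    have "w * (dm * K) * 1000 = K * (1000 * dm * K) / n" using w by simp
    also have "\<dots> \<le> K * n / n" using Kn K n by (intro divide_right_mono mult_left_mono) auto
    finally show ?thesis using n by simp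
  qed
  moreover have "u * (D + dm * K) = u * D + u * (dm * K)" by (simp add: algebra_simps)
  moreover have "(u - w) * D = u * D - w * D" by (simp add: algebra_simps)
  moreover have "(-(59/100) * w) * (2 * (n - K)) = -(118/100) * (w * n) + (118/100) * (w * K)" by (simp add: algebra_simps divide_simps)
  moreover have "((41/100) * w) * (dm * K) = (41/100) * (w * (dm * K))" by simp
  ultimately show ?thesis using wn M K by linarith
qed

theorem lemma9:
  fixes dmin dmax :: nat
  assumes "2 \<le> dmin" and "dmin \<le> dmax"
  shows "\<exists>c1 > 0. \<exists>N. \<forall>n \<ge> N. \<forall>(V :: nat set) (B :: nat set) (d :: nat \<Rightarrow> nat).
           finite V \<and> card V = n \<and> B \<subseteq> V \<and> (\<forall>v\<in>V. dmin \<le> d v \<and> d v \<le> dmax)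
           \<and> real (card B) \<le> c1 * real n \<longrightarrow>
           (\<forall>S. B \<subseteq> S \<and> S \<subseteq> V
                \<and> 30 * real (card (d ` V)) * ln (real n) \<le> real (card S)
                \<and> real (card S) \<le> c1 * real n \<longrightarrow>
                a_coef V d B S < 1 / real n ^ (3 * card (d ` V)))"
proof -
  have dmax2: "2 \<le> dmax" using assms by simp
  define c1 :: real where "c1 = 1 / (1000 * real dmax)"
  have c1pos: "c1 > 0" using dmax2 by (simp add: c1_def)
  have main: "a_coef V d B S < 1 / real n ^ (3 * card (d ` V))"
    if n: "n \<ge> 100 * dmax + 3" and fV: "finite V" and cV: "card V = n" and BV: "B \<subseteq> V"
      and dV: "\<forall>v\<in>V. dmin \<le> d v \<and> d v \<le> dmax"
      and BS: "B \<subseteq> S" and SV: "S \<subseteq> V"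
      and lo: "30 * real (card (d ` V)) * ln (real n) \<le> real (card S)"
      and hi: "real (card S) \<le> c1 * real n"
    for n V B d S
  proof -
    define k where "k = card S"
    define x where "x = card (d ` V)"
    have nr: "real n \<ge> 100 * real dmax + 3" using n by linarith
    have dmr: "real dmax \<ge> 2" using dmax2 by linarith
    have c1n: "c1 * real n = real n / (1000 * real dmax)" by (simp add: c1_def)
    have Kle: "1000 * real dmax * real k \<le> real n"
      using hi dmr unfolding c1n k_def by (simp add: field_simps)
    have Vne: "V \<noteq> {}" using cV n by auto
    have x1: "x \<ge> 1" unfolding x_def using Vne fV by (simp add: Suc_le_eq card_gt_0_iff)
    have lnpos: "ln (real n) > 0" using nr by simp
    have Kpos: "real k > 0"
    proof -
      have "0 < 30 * real x * ln (real n)" using x1 lnpos by simp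
      then show ?thesis using lo unfolding x_def k_def by linarith
    qed
    have kr: "real k + real dmax \<le> real n"
    proof -
      have "1000 * real dmax * real k \<ge> 2000 * real k" using dmr Kpos by simp
      then show ?thesis using Kle nr by linarith
    qed
    have kd: "k + dmax \<le> n" using kr by linarith
    have k1: "k \<ge> 1" using Kpos by simp
    define q where "q \<delta> = real ((n - k) choose \<delta>) / real (n choose \<delta>)" for \<delta>
    define p where "p \<delta> = 1 - q \<delta>" for \<delta>
    define nd where "nd = real n - real dmax"
    have ndpos: "nd \<ge> (99/100) * real n" unfolding nd_def using nr by linarith
    have npos: "real n > 0" using nr by linarith
    have qprops: "0 \<le> q \<delta> \<and> q \<delta> \<le> exp (- (real \<delta> * (real k / real n))) \<and> 0 \<le> p \<delta> \<and> p \<delta> \<le> real \<delta> * real k / nd"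
      if "\<delta> \<in> d ` V" for \<delta>
    proof -
      have \<delta>: "2 \<le> \<delta>" "\<delta> \<le> dmax" using that dV assms by auto
      have kd2: "k + \<delta> \<le> n" "\<delta> < n" using kd \<delta> k1 by linarith+
      note qb = q_bounds[OF kd2]
      have nd2: "real (n - \<delta>) = real n - real \<delta>" using kd2 by simp
      have nd3: "real n - real \<delta> \<ge> nd" unfolding nd_def using \<delta> by simp
      have ndp: "nd > 0" using ndpos npos by linarith
      have kk: "real k \<le> real n - real \<delta>" using kd2 by linarith
      have b1: "0 \<le> 1 - real k / real (n - \<delta>)" using kk ndp nd3 unfolding nd2 by (simp add: divide_simps)
      have q0: "0 \<le> q \<delta>" unfolding q_def using qb(2) b1 by (meson order_trans zero_le_power)
      have b2: "0 \<le> 1 - real k / real n" using kr npos by (simp add: divide_simps)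
      have b3: "1 - real k / real n \<le> exp (- (real k / real n))"
        using exp_ge_add_one_self[of "- (real k / real n)"] by simp
      have "q \<delta> \<le> (1 - real k / real n) ^ \<delta>" unfolding q_def by (rule qb(1))
      also have "\<dots> \<le> exp (- (real k / real n)) ^ \<delta>" by (rule power_mono[OF b3 b2])
      also have "\<dots> = exp (- (real \<delta> * (real k / real n)))"
        using exp_of_nat_mult[of \<delta> "- (real k / real n)"] by simp
      finally have q1: "q \<delta> \<le> exp (- (real \<delta> * (real k / real n)))" .
      have "(1 - real k / real n) ^ \<delta> \<le> 1" using b2 by (rule power_le_one) simp
      then have p0: "0 \<le> p \<delta>" unfolding p_def using qb(1) unfolding q_def by linarith
      have "1 + real \<delta> * (- (real k / real (n - \<delta>))) \<le> (1 + - (real k / real (n - \<delta>))) ^ \<delta>"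
        by (rule Bernoulli_inequality) (use b1 in simp)
      then have "p \<delta> \<le> real \<delta> * (real k / real (n - \<delta>))"
        unfolding p_def using qb(2) unfolding q_def by simp
      also have "\<dots> \<le> real \<delta> * (real k / nd)"
        using Kpos ndp nd3 unfolding nd2 by (intro mult_left_mono divide_left_mono) auto
      finally have p1: "p \<delta> \<le> real \<delta> * real k / nd" by simp
      show ?thesis using q0 q1 p0 p1 by simp
    qed
    define A where "A \<delta> = cnt d V \<delta> - cnt d B \<delta>" for \<delta>
    define m where "m \<delta> = cnt d S \<delta> - cnt d B \<delta>" for \<delta>
    define r where "r \<delta> = cnt d V \<delta> - cnt d S \<delta>" for \<delta>
    have fS: "finite S" using fV SV finite_subset by blast
    have BV': "B \<subseteq> V" using BS SV by blast
    have Aeq: "A \<delta> = cnt d (V - B) \<delta>" for \<delta> unfolding A_def by (rule cnt_diff[OF fV BV'])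
    have meq: "m \<delta> = cnt d (S - B) \<delta>" for \<delta> unfolding m_def by (rule cnt_diff[OF fS BS])
    have req: "r \<delta> = cnt d (V - S) \<delta>" for \<delta> unfolding r_def by (rule cnt_diff[OF fV SV])
    define u where "u = real k / (exp 1 * nd)"
    define w where "w = real k / real n"
    define E where "E \<delta> = real (m \<delta>) + u * (real \<delta> * real (A \<delta>)) - w * (real \<delta> * real (r \<delta>))" for \<delta>
    have ndp: "nd > 0" using ndpos npos by linarith
    have e0: "exp (1::real) > 0" by (rule exp_gt_zero)
    have per: "real (A \<delta> choose m \<delta>) * q \<delta> ^ r \<delta> * p \<delta> ^ m \<delta> \<le> exp (E \<delta>)"
      if "\<delta> \<in> d ` V" for \<delta>
    proof -
      note qp = qprops[OF that]
      have e1: "real (A \<delta> choose m \<delta>) * p \<delta> ^ m \<delta> = exp (real (m \<delta>)) * (real (A \<delta> choose m \<delta>) * (p \<delta> / exp 1) ^ m \<delta>)"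
      proof -
        have "exp (real (m \<delta>)) = exp 1 ^ m \<delta>" using exp_of_nat_mult[of "m \<delta>" 1] by simp
        then show ?thesis by (simp add: power_divide)
      qed
      have pe0: "0 \<le> p \<delta> / exp 1" using qp by simp
      have e2: "real (A \<delta> choose m \<delta>) * (p \<delta> / exp 1) ^ m \<delta> \<le> (1 + p \<delta> / exp 1) ^ A \<delta>"
        by (rule binom_pow_le[OF pe0])
      have e3: "(1 + p \<delta> / exp 1) ^ A \<delta> \<le> exp (p \<delta> / exp 1) ^ A \<delta>"
        by (rule power_mono) (use exp_ge_add_one_self[of "p \<delta> / exp 1"] pe0 in auto)
      have e4: "exp (p \<delta> / exp 1) ^ A \<delta> = exp (real (A \<delta>) * (p \<delta> / exp 1))"
        using exp_of_nat_mult[of "A \<delta>" "p \<delta> / exp 1"] by simp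
      have "p \<delta> / exp 1 \<le> (real \<delta> * real k / nd) / exp 1"
        using qp by (intro divide_right_mono) auto
      also have "\<dots> = u * real \<delta>" unfolding u_def by (simp add: field_simps)
      finally have "real (A \<delta>) * (p \<delta> / exp 1) \<le> real (A \<delta>) * (u * real \<delta>)"
        by (intro mult_left_mono) auto
      then have e5: "exp (real (A \<delta>) * (p \<delta> / exp 1)) \<le> exp (u * (real \<delta> * real (A \<delta>)))"
        by (simp add: algebra_simps)
      have bp: "real (A \<delta> choose m \<delta>) * p \<delta> ^ m \<delta> \<le> exp (real (m \<delta>)) * exp (u * (real \<delta> * real (A \<delta>)))"
      proof -
        have "real (A \<delta> choose m \<delta>) * (p \<delta> / exp 1) ^ m \<delta> \<le> exp (u * (real \<delta> * real (A \<delta>)))"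
          using e2 e3 e4 e5 by linarith
        then show ?thesis unfolding e1 by (intro mult_left_mono) auto
      qed
      have qr: "q \<delta> ^ r \<delta> \<le> exp (- (w * (real \<delta> * real (r \<delta>))))"
      proof -
        have "q \<delta> ^ r \<delta> \<le> exp (- (real \<delta> * (real k / real n))) ^ r \<delta>"
          using qp by (intro power_mono) auto
        also have "\<dots> = exp (real (r \<delta>) * (- (real \<delta> * (real k / real n))))"
          using exp_of_nat_mult[of "r \<delta>" "- (real \<delta> * (real k / real n))"] by simp
        also have "\<dots> = exp (- (w * (real \<delta> * real (r \<delta>))))" unfolding w_def by (simp add: algebra_simps)
        finally show ?thesis .
      qed
      have "real (A \<delta> choose m \<delta>) * q \<delta> ^ r \<delta> * p \<delta> ^ m \<delta> = (real (A \<delta> choose m \<delta>) * p \<delta> ^ m \<delta>) * q \<delta> ^ r \<delta>"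
        by (simp add: algebra_simps)
      also have "\<dots> \<le> (exp (real (m \<delta>)) * exp (u * (real \<delta> * real (A \<delta>)))) * exp (- (w * (real \<delta> * real (r \<delta>))))"
        by (rule mult_mono[OF bp qr]) (use qp in auto)
      also have "\<dots> = exp (E \<delta>)" unfolding E_def by (simp add: exp_add[symmetric] exp_diff)
      finally show ?thesis .
    qed
    have aeq: "a_coef V d B S = (\<Prod>\<delta>\<in>d ` V. real (A \<delta> choose m \<delta>) * q \<delta> ^ r \<delta>) * R_prob V d B S"
      unfolding a_coef_def A_def m_def r_def q_def cV k_def by simp
    have Rb: "R_prob V d B S \<le> (\<Prod>\<delta>\<in>d ` V. p \<delta> ^ m \<delta>)"
    proof -
      have dn: "\<forall>v\<in>V. d v \<le> card V" using dV kd cV by force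
      have "R_prob V d B S \<le> (\<Prod>v\<in>S - B. 1 - real ((card V - card S) choose d v) / real (card V choose d v))"
        by (rule R_bound[OF fV SV dn])
      also have "\<dots> = (\<Prod>v\<in>S - B. p (d v))" unfolding p_def q_def cV k_def by simp
      also have "\<dots> = (\<Prod>\<delta>\<in>d ` V. p \<delta> ^ cnt d (S - B) \<delta>)"
        by (rule prod_group_deg[OF fV]) (use SV in blast)
      finally show ?thesis unfolding meq .
    qed
    have fD: "finite (d ` V)" using fV by simp
    have "a_coef V d B S \<le> (\<Prod>\<delta>\<in>d ` V. real (A \<delta> choose m \<delta>) * q \<delta> ^ r \<delta>) * (\<Prod>\<delta>\<in>d ` V. p \<delta> ^ m \<delta>)"
      unfolding aeq using qprops by (intro mult_left_mono[OF Rb] prod_nonneg) auto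
    also have "\<dots> = (\<Prod>\<delta>\<in>d ` V. real (A \<delta> choose m \<delta>) * q \<delta> ^ r \<delta> * p \<delta> ^ m \<delta>)"
      by (simp add: prod.distrib)
    also have "\<dots> \<le> (\<Prod>\<delta>\<in>d ` V. exp (E \<delta>))"
      using per qprops by (intro prod_mono) auto
    also have "\<dots> = exp (\<Sum>\<delta>\<in>d ` V. E \<delta>)" by (simp add: exp_sum fD)
    finally have a1: "a_coef V d B S \<le> exp (\<Sum>\<delta>\<in>d ` V. E \<delta>)" .
    define SVB where "SVB = (\<Sum>v\<in>V - B. real (d v))"
    define D where "D = (\<Sum>v\<in>V - S. real (d v))"
    have sm: "(\<Sum>\<delta>\<in>d ` V. real (m \<delta>)) = real (card (S - B))"
    proof -
      have sSB: "S - B \<subseteq> V" using SV by blast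
      show ?thesis using sum_group_deg[OF fV sSB, where f="\<lambda>_. 1" and d=d] unfolding meq by simp
    qed
    have sA: "(\<Sum>\<delta>\<in>d ` V. real \<delta> * real (A \<delta>)) = SVB"
      using sum_group_deg[OF fV, of "V - B" real d] unfolding Aeq SVB_def by auto
    have sr: "(\<Sum>\<delta>\<in>d ` V. real \<delta> * real (r \<delta>)) = D"
      using sum_group_deg[OF fV, of "V - S" real d] unfolding req D_def by auto
    have sE: "(\<Sum>\<delta>\<in>d ` V. E \<delta>) = real (card (S - B)) + u * SVB - w * D"
      unfolding E_def sm[symmetric] sA[symmetric] sr[symmetric]
      by (simp add: sum.distrib sum_subtractf sum_distrib_left)
    have cSB: "real (card (S - B)) \<le> real k"
      unfolding k_def using fS by (simp add: card_mono)
    have SVBle: "SVB \<le> D + real dmax * real k"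
    proof -
      have un: "V - B = (V - S) \<union> (S - B)" using SV BS by blast
      have "SVB = D + (\<Sum>v\<in>S - B. real (d v))"
        unfolding SVB_def D_def un by (rule sum.union_disjoint) (use fV fS in auto)
      moreover have "(\<Sum>v\<in>S - B. real (d v)) \<le> real (card (S - B)) * real dmax"
        by (rule sum_bounded_above) (use dV SV in auto)
      moreover have "real (card (S - B)) * real dmax \<le> real k * real dmax"
        using cSB by (intro mult_right_mono) auto
      ultimately show ?thesis by (simp add: algebra_simps)
    qed
    have Dge: "D \<ge> 2 * (real n - real k)"
    proof -
      have cVS: "card (V - S) = n - k" unfolding k_def using fS SV cV by (simp add: card_Diff_subset)
      have "real (card (V - S)) * 2 \<le> D"
        unfolding D_def by (rule sum_bounded_below) (use dV assms in force)
      moreover have "real (card (V - S)) = real n - real k" unfolding cVS using kd by simp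
      ultimately show ?thesis by simp
    qed
    have eb: "exp (1::real) \<ge> 5/2"
      using exp_lower_Taylor_quadratic[of 1] by simp
    have uw: "u \<le> (41/100) * w"
    proof -
      have "exp 1 * nd \<ge> (5/2) * ((99/100) * real n)"
        using eb ndpos npos by (intro mult_mono) auto
      then have den: "exp 1 * nd \<ge> (99/40) * real n" by simp
      have "u \<le> real k / ((99/40) * real n)"
        unfolding u_def using den Kpos npos by (intro divide_left_mono) auto
      also have "\<dots> \<le> (41/100) * w" unfolding w_def using Kpos npos by (simp add: field_simps)
      finally show ?thesis .
    qed
    have u0: "0 \<le> u" unfolding u_def using Kpos ndp by simp
    have fin: "real (card (S - B)) + u * SVB - w * D \<le> - real k / 6"
      by (rule arith_final[OF Kpos npos w_def u0 uw cSB SVBle Dge]) (use Kle dmr in auto)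
    have "exp (\<Sum>\<delta>\<in>d ` V. E \<delta>) \<le> exp (- real k / 6)" unfolding sE using fin by simp
    then have "a_coef V d B S \<le> exp (- real k / 6)" using a1 by linarith
    also have "\<dots> \<le> exp (- (5 * real x * ln (real n)))"
      using lo unfolding x_def k_def by simp
    also have "\<dots> < exp (- (real (3 * x) * ln (real n)))"
      using x1 lnpos by simp
    also have "\<dots> = 1 / real n ^ (3 * x)"
    proof -
      have "exp (real (3 * x) * ln (real n)) = exp (ln (real n)) ^ (3 * x)"
        by (rule exp_of_nat_mult)
      also have "\<dots> = real n ^ (3 * x)" using npos by simp
      finally show ?thesis by (simp add: exp_minus field_simps)
    qed
    finally show ?thesis unfolding x_def .
  qed
  show ?thesis
    apply (rule exI[of _ c1], rule conjI[OF c1pos], rule exI[of _ "100 * dmax + 3"])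
    using main by blast
qed

end
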